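(* Let $\mathcal{D}=M_{n_1}(\mathbb{C})\oplus\cdots\oplus M_{n_k}(\mathbb{C})$, let $\mathcal{A}\subseteq\mathcal{D}$ be a CSL subalgebra, and let $\mathcal{B}$ be a complex algebra containing $\mathcal{D}$ as a subalgebra with the same unit $I$. If $\delta:\mathcal{A}\to\mathcal{B}$ is a linear map with $(m+n+l)\delta(A^2)=m\delta(A)A+nA\delta(A)+lA\delta(I)A$ for all $A\in\mathcal{A}$, then $\delta(AB)=\delta(A)B=A\delta(B)$ for all $A,B\in\mathcal{A}$.
   Context: Fixed integers $m,n,l\ge 0$ satisfy $m+l\ge1$ and $n+l\ge1$. A CSL subalgebra of $\mathcal{D}$ is a subalgebra of the form $\mathrm{alg}\mathcal{L}$ for a commutative lattice $\mathcal{L}$ of projections in the diagonal of $\mathcal{D}$ (with respect to a fixed system of matrix units); in particular it contains all diagonal matrix units $E_{ii}$ and is the linear span of the matrix units $E_{ij}$ it contains. *)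

theory Defs
  imports "HOL-Analysis.Analysis"
begin

text \<open>The algebra D = M_{n_1} + ... + M_{n_k} is realised as the block-diagonal
 matrices for a block labelling blk :: 'n => nat (indices with equal labels form a block).\<close>

definition blockdiag :: "('n::finite \<Rightarrow> nat) \<Rightarrow> (complex^'n^'n) set" where
  "blockdiag blk = {X. \<forall>i j. blk i \<noteq> blk j \<longrightarrow> X$i$j = 0}"

definition cmat_scale :: "complex \<Rightarrow> complex^'n^'n \<Rightarrow> complex^'n^'n" where
  "cmat_scale c X = (\<chi> i j. c * X$i$j)"

definition diag_proj :: "complex^'n^'n \<Rightarrow> bool" where
  "diag_proj P \<longleftrightarrow> (\<exists>S. P = (\<chi> i j. if i = j \<and> i \<in> S then 1 else 0))"

text \<open>A (commutative) lattice of diagonal projections: contains 0 and I, closed under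
 meet (P Q) and join (P + Q - P Q).\<close>
definition diag_proj_lattice :: "(complex^'n^'n) set \<Rightarrow> bool" where
  "diag_proj_lattice L \<longleftrightarrow> (\<forall>P\<in>L. diag_proj P) \<and> 0 \<in> L \<and> mat 1 \<in> L \<and>
     (\<forall>P\<in>L. \<forall>Q\<in>L. P ** Q \<in> L \<and> P + Q - P ** Q \<in> L)"

text \<open>alg L inside D: elements of D leaving every projection of L invariant.\<close>
definition alg_lat :: "(complex^'n^'n) set \<Rightarrow> (complex^'n^'n) set \<Rightarrow> (complex^'n^'n) set" where
  "alg_lat D L = {X \<in> D. \<forall>P\<in>L. (mat 1 - P) ** X ** P = 0}"

definition CSL_subalgebra :: "(complex^'n^'n) set \<Rightarrow> (complex^'n^'n) set \<Rightarrow> bool" where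
  "CSL_subalgebra D A \<longleftrightarrow> (\<exists>L. diag_proj_lattice L \<and> (\<forall>P\<in>L. P \<in> D) \<and> A = alg_lat D L)"

text \<open>A unital complex algebra structure on a ring 'b: a unital ring homomorphism
 psi from the complex numbers into the centre of 'b (scalar multiplication c.b = psi c * b).\<close>
definition complex_alg_str :: "(complex \<Rightarrow> 'b::ring_1) \<Rightarrow> bool" where
  "complex_alg_str psi \<longleftrightarrow> psi 1 = 1 \<and> (\<forall>a b. psi (a + b) = psi a + psi b) \<and>
     (\<forall>a b. psi (a * b) = psi a * psi b) \<and> (\<forall>a x. psi a * x = x * psi a)"

definition unital_subalg_embedding ::
  "(complex \<Rightarrow> 'b::ring_1) \<Rightarrow> (complex^'n^'n) set \<Rightarrow> (complex^'n^'n \<Rightarrow> 'b) \<Rightarrow> bool" where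
  "unital_subalg_embedding psi D phi \<longleftrightarrow> inj_on phi D \<and> phi (mat 1) = 1 \<and>
     (\<forall>X\<in>D. \<forall>Y\<in>D. phi (X + Y) = phi X + phi Y \<and> phi (X ** Y) = phi X * phi Y) \<and>
     (\<forall>c. \<forall>X\<in>D. phi (cmat_scale c X) = psi c * phi X)"

definition linear_on_into ::
  "(complex \<Rightarrow> 'b::ring_1) \<Rightarrow> (complex^'n^'n) set \<Rightarrow> (complex^'n^'n \<Rightarrow> 'b) \<Rightarrow> bool" where
  "linear_on_into psi A f \<longleftrightarrow> (\<forall>X\<in>A. \<forall>Y\<in>A. f (X + Y) = f X + f Y) \<and>
     (\<forall>c. \<forall>X\<in>A. f (cmat_scale c X) = psi c * f X)"

end

theory Submission
  imports Defs
begin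


lemma ring_star:
  fixes D2 d T x :: "'b::ring_1"
  assumes e1: "of_nat k * D2 = of_nat m*(d*x) + of_nat n*(x*d) + of_nat l*(x*T*x)"
    and e2: "of_nat k*(D2 + d + d + T) = of_nat m*((d+T)*(x+1)) + of_nat n*((x+1)*(d+T)) + of_nat l*((x+1)*T*(x+1))"
    and k: "k = m+n+l"
  shows "of_nat (m+n+2*l) * d = of_nat (m+l)*(T*x) + of_nat (n+l)*(x*T)"
proof -
  have "of_nat k*(D2 + d + d + T) = of_nat k * D2 + (of_nat k * d + of_nat k * d + of_nat k * T)"
    by (simp add: algebra_simps)
  also have "\<dots> = of_nat m*(d*x) + of_nat n*(x*d) + of_nat l*(x*T*x) + (of_nat k * d + of_nat k * d + of_nat k * T)"
    using e1 by simp
  finally have "of_nat m*(d*x) + of_nat n*(x*d) + of_nat l*(x*T*x) + (of_nat k * d + of_nat k * d + of_nat k * T)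
     = of_nat m*(d*x) + of_nat n*(x*d) + of_nat l*(x*T*x) + (of_nat m*(d + T*x + T) + of_nat n*(x*T+d+T) + of_nat l*(x*T+T*x+T))"
    using e2 by (simp add: algebra_simps)
  hence "of_nat k * d + of_nat k * d + of_nat k * T = of_nat m*(d + T*x + T) + of_nat n*(x*T+d+T) + of_nat l*(x*T+T*x+T)"
    by simp
  moreover have "(of_nat (m+n+2*l)::'b) = of_nat m + of_nat n + of_nat l + of_nat l" by (simp add: mult_2)
  ultimately show ?thesis unfolding k by (simp add: algebra_simps)
qed

lemma nat_L1: "(x::'b::ring_1) * (of_nat a * y) = of_nat a * (x * y)"
  by (simp only: mult.assoc[symmetric] mult_of_nat_commute[of a x, symmetric])
lemma nat_L2: "(of_nat a::'b::ring_1) * (of_nat b * x) = of_nat b * (of_nat a * x)"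
  by (simp only: mult.assoc[symmetric] of_nat_mult[symmetric] mult.commute[of a b])

lemma ring_key:
  fixes T p d u :: "'b::ring_1"
  assumes pp: "p*p = p"
    and e1: "of_nat (m+n+2*l) * d = of_nat (m+l) * (T*p) + of_nat (n+l) * (p*T)"
    and e2: "of_nat (m+n+l) * d = of_nat m * (d*p) + of_nat n * (p*d) + of_nat l * (p*T*p)"
    and u: "u * of_nat ((m+l)*(n+l)) = 1"
  shows "T*p = p*T"
proof -
  define N where "N = m+n+2*l"
  define s where "s = (of_nat N :: 'b)"
  define x where "x = T*p"
  define y where "y = p*T"
  define z where "z = p*T*p"
  have px: "p*x = z" unfolding x_def z_def by (simp add: mult.assoc)
  have xp: "x*p = x" unfolding x_def by (simp add: mult.assoc pp)
  have py: "p*y = y" unfolding y_def by (simp add: mult.assoc[symmetric] pp)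
  have yp: "y*p = z" unfolding y_def z_def by simp
  have "s * (of_nat (m+n+l) * d) = of_nat (m+n+l) * (s*d)"
    unfolding s_def by (rule nat_L2)
  also have "\<dots> = of_nat (m+n+l) * (of_nat (m+l) * x + of_nat (n+l) * y)"
    using e1 unfolding s_def N_def x_def y_def by simp
  finally have A: "s * (of_nat (m+n+l) * d) = of_nat (m+n+l) * (of_nat (m+l) * x + of_nat (n+l) * y)" .
  have "s * (of_nat (m+n+l) * d) = of_nat m * ((s*d)*p) + of_nat n * (p*(s*d)) + s*(of_nat l * z)"
    unfolding e2 z_def s_def by (simp add: algebra_simps nat_L1[of p] nat_L1[of T] nat_L1[of d] nat_L1[of x] nat_L1[of y] nat_L1[of z] nat_L2)
  also have "\<dots> = of_nat m * ((of_nat (m+l) * x + of_nat (n+l) * y)*p) + of_nat n * (p*(of_nat (m+l) * x + of_nat (n+l) * y)) + s*(of_nat l * z)"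
    using e1 unfolding s_def N_def x_def y_def by simp
  also have "\<dots> = of_nat m * (of_nat (m+l) * x + of_nat (n+l) * z) + of_nat n * (of_nat (m+l) * z + of_nat (n+l) * y) + s*(of_nat l * z)"
    by (simp add: algebra_simps nat_L1[of p] nat_L1[of T] nat_L1[of d] nat_L1[of x] nat_L1[of y] nat_L1[of z] nat_L2 xp yp px py)
  finally have B: "of_nat (m+n+l) * (of_nat (m+l) * x + of_nat (n+l) * y) = of_nat m * (of_nat (m+l) * x + of_nat (n+l) * z) + of_nat n * (of_nat (m+l) * z + of_nat (n+l) * y) + s*(of_nat l * z)"
    using A by simp
  define c where "c = (of_nat ((m+l)*(n+l)) :: 'b)"
  have nm1: "\<And>a b w. (of_nat a::'b) * (of_nat b * w) = of_nat (a*b) * w"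
    by (simp only: mult.assoc[symmetric] of_nat_mult)
  have nm2: "\<And>a b w. (of_nat (a+b)::'b) * w = of_nat a * w + of_nat b * w"
    by (simp only: of_nat_add distrib_right)
  have C: "c * x + c * y = c * z + c * z"
  proof -
    define k where "k = m+n+l"
    define a where "a = m+l"
    define b where "b = n+l"
    have cab: "c = of_nat (a*b)" unfolding c_def a_def b_def ..
    have e: "k*a = m*a + a*b" "k*b = n*b + a*b" "m*b+n*a+N*l = a*b + a*b"
      unfolding k_def a_def b_def N_def by (simp_all add: algebra_simps)
    have B': "of_nat (k*a)*x + of_nat(k*b)*y = of_nat (m*a) * x + of_nat (n*b) * y + (of_nat (m*b+n*a+N*l) * z)"
      using B unfolding s_def k_def[symmetric] a_def[symmetric] b_def[symmetric]
      by (simp only: distrib_left nm1 nm2 add_ac)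
    have "(of_nat(m*a)*x + of_nat(n*b)*y) + (of_nat(a*b)*x + of_nat(a*b)*y) = (of_nat(m*a)*x + of_nat(n*b)*y) + (of_nat(a*b)*z + of_nat(a*b)*z)"
      using B' unfolding e nm2 by (simp only: add_ac)
    then show ?thesis unfolding cab by (simp only: add_left_cancel)
  qed
  have D: "x + y = z + z"
  proof -
    have "u * (c*x + c*y) = u * (c*z + c*z)" using C by simp
    thus ?thesis using u unfolding c_def by (simp add: distrib_left flip: mult.assoc)
  qed
  have pz: "p*z = z" unfolding z_def by (metis mult.assoc pp)
  have zp: "z*p = z" unfolding z_def by (metis mult.assoc pp)
  have "p*(x+y) = p*(z+z)" using D by simp
  hence Y: "y = z" using px py pz by (simp add: distrib_left)
  have "(x+y)*p = (z+z)*p" using D by simp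
  hence X: "x = z" using xp yp zp by (simp add: distrib_right)
  show ?thesis using X Y unfolding x_def y_def by simp
qed


definition dp :: "'n set \<Rightarrow> complex^'n^'n" where
  "dp S = (\<chi> i j. if i = j \<and> i \<in> S then 1 else 0)"
definition okS :: "'n set \<Rightarrow> complex^'n^'n \<Rightarrow> bool" where
  "okS S X \<longleftrightarrow> (\<forall>i j. i \<notin> S \<and> j \<in> S \<longrightarrow> X$i$j = 0)"
definition EE :: "'n \<Rightarrow> 'n \<Rightarrow> complex^'n^'n" where
  "EE i j = (\<chi> r c. if r = i \<and> c = j then 1 else 0)"
definition QQ :: "'n \<Rightarrow> 'n \<Rightarrow> complex^'n^'n" where
  "QQ i j = (\<chi> r c. if r = i \<and> (c = i \<or> c = j) then 1 else 0)"

lemma mm_comp: "(X ** Y)$i$j = (\<Sum>k\<in>UNIV. X$i$k * Y$k$j)"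
  by (simp add: matrix_matrix_mult_def)

lemma sum_delta_conj: "(\<Sum>k\<in>(UNIV::'a::finite set). if k = j \<and> P k then f k else 0) = (if P j then f j else (0::'b::comm_monoid_add))"
proof -
  have "(\<Sum>k\<in>(UNIV::'a set). if k = j \<and> P k then f k else 0) = (\<Sum>k\<in>UNIV. if k = j then (if P j then f j else 0) else 0)"
    by (rule sum.cong) auto
  thus ?thesis by (simp add: sum.delta')
qed

lemma inv_comp: "((mat 1 - dp S) ** X ** dp S)$i$j = (if i \<notin> S \<and> j \<in> S then X$i$j else (0::complex))"
proof -
  have 1: "((mat 1 - dp S) ** X)$i$k = (if i \<in> S then 0 else X$i$k)" for k
    unfolding mm_comp by (simp add: dp_def mat_def if_distrib[of "\<lambda>x. x * _"] sum.delta cong: if_cong)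
  show ?thesis unfolding mm_comp[of "(mat 1 - dp S) ** X"] 1
    by (simp add: dp_def if_distrib[of "\<lambda>x. _ * x"] sum.delta' sum_delta_conj cong: if_cong)
qed

lemma inv_char: "((mat 1 - dp S) ** X ** dp S = 0) \<longleftrightarrow> okS S X"
  unfolding okS_def vec_eq_iff inv_comp by auto

lemma alg_char:
  assumes "\<forall>P\<in>L. diag_proj P"
  shows "X \<in> alg_lat D L \<longleftrightarrow> X \<in> D \<and> (\<forall>P\<in>L. \<forall>S. P = dp S \<longrightarrow> okS S X)"
proof -
  have "(\<forall>P\<in>L. (mat 1 - P) ** X ** P = 0) \<longleftrightarrow> (\<forall>P\<in>L. \<forall>S. P = dp S \<longrightarrow> okS S X)"
  proof
    assume "\<forall>P\<in>L. (mat 1 - P) ** X ** P = 0"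
    thus "\<forall>P\<in>L. \<forall>S. P = dp S \<longrightarrow> okS S X" using inv_char by blast
  next
    assume h: "\<forall>P\<in>L. \<forall>S. P = dp S \<longrightarrow> okS S X"
    show "\<forall>P\<in>L. (mat 1 - P) ** X ** P = 0"
    proof
      fix P assume "P \<in> L"
      then obtain S where "P = dp S" using assms unfolding diag_proj_def dp_def by blast
      thus "(mat 1 - P) ** X ** P = 0" using h \<open>P \<in> L\<close> inv_char by blast
    qed
  qed
  thus ?thesis unfolding alg_lat_def by blast
qed

lemma ok_add: "okS S X \<Longrightarrow> okS S Y \<Longrightarrow> okS S (X + Y)"
  unfolding okS_def by simp
lemma ok_mult: assumes "okS S X" "okS S Y" shows "okS S (X ** Y)"
  unfolding okS_def mm_comp
proof (intro allI impI sum.neutral ballI)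
  fix i j k assume "i \<notin> S \<and> j \<in> S"
  then show "X$i$k * Y$k$j = 0" using assms unfolding okS_def by (cases "k \<in> S") auto
qed
lemma ok_one: "okS S (mat 1)"
  unfolding okS_def by (auto simp: mat_def)
lemma ok_E: "okS S X \<Longrightarrow> X$i$j \<noteq> 0 \<Longrightarrow> okS S (EE i j)"
  unfolding okS_def EE_def by auto
lemma ok_Q: "okS S X \<Longrightarrow> X$i$j \<noteq> 0 \<Longrightarrow> okS S (QQ i j)"
  unfolding okS_def QQ_def by auto

lemma bd_add: "X \<in> blockdiag blk \<Longrightarrow> Y \<in> blockdiag blk \<Longrightarrow> X + Y \<in> blockdiag blk"
  unfolding blockdiag_def by simp
lemma bd_mult: assumes "X \<in> blockdiag blk" "Y \<in> blockdiag blk" shows "X ** Y \<in> blockdiag blk"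
  unfolding blockdiag_def mem_Collect_eq mm_comp
proof (intro allI impI sum.neutral ballI)
  fix i j k assume "blk i \<noteq> blk j"
  then show "X$i$k * Y$k$j = 0" using assms unfolding blockdiag_def by (cases "blk k = blk i") auto
qed
lemma bd_one: "mat 1 \<in> blockdiag blk"
  unfolding blockdiag_def by (auto simp: mat_def)
lemma bd_zero: "0 \<in> blockdiag blk"
  unfolding blockdiag_def by auto
lemma bd_scale: "X \<in> blockdiag blk \<Longrightarrow> cmat_scale c X \<in> blockdiag blk"
  unfolding blockdiag_def cmat_scale_def by simp
lemma bd_E: "X \<in> blockdiag blk \<Longrightarrow> X$i$j \<noteq> 0 \<Longrightarrow> EE i j \<in> blockdiag blk"
  unfolding blockdiag_def EE_def by auto
lemma bd_Q: "X \<in> blockdiag blk \<Longrightarrow> X$i$j \<noteq> 0 \<Longrightarrow> QQ i j \<in> blockdiag blk"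
  unfolding blockdiag_def QQ_def by auto

lemma QQ_idem: "QQ i j ** QQ i j = QQ i j"
proof -
  have "(QQ i j ** QQ i j)$r$c = QQ i j$r$c" for r c
  proof -
    have "(QQ i j ** QQ i j)$r$c = (\<Sum>k\<in>UNIV. if k = i then QQ i j$r$i * QQ i j$i$c else 0)"
      unfolding mm_comp by (rule sum.cong) (auto simp: QQ_def)
    also have "\<dots> = QQ i j$r$c" by (simp add: sum.delta' QQ_def)
    finally show ?thesis .
  qed
  thus ?thesis by (simp add: vec_eq_iff)
qed
lemma EE_idem: "EE i i ** EE i i = EE i i"
proof -
  have "(EE i i ** EE i i)$r$c = EE i i$r$c" for r c
  proof -
    have "(EE i i ** EE i i)$r$c = (\<Sum>k\<in>UNIV. if k = i then EE i i$r$i * EE i i$i$c else 0)"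
      unfolding mm_comp by (rule sum.cong) (auto simp: EE_def)
    also have "\<dots> = EE i i$r$c" by (simp add: sum.delta' EE_def)
    finally show ?thesis .
  qed
  thus ?thesis by (simp add: vec_eq_iff)
qed
lemma QQ_split: "i \<noteq> j \<Longrightarrow> QQ i j = EE i i + EE i j"
  unfolding vec_eq_iff by (auto simp: QQ_def EE_def)

lemma decomp: "X = (\<Sum>p\<in>{p. X$fst p$snd p \<noteq> 0}. cmat_scale (X$fst p$snd p) (EE (fst p) (snd p)))"
proof -
  have "(\<Sum>p\<in>{p. X$fst p$snd p \<noteq> 0}. cmat_scale (X$fst p$snd p) (EE (fst p) (snd p)))$r$c = X$r$c" for r c
  proof -
    have "(\<Sum>p\<in>{p. X$fst p$snd p \<noteq> 0}. cmat_scale (X$fst p$snd p) (EE (fst p) (snd p)))$r$c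
      = (\<Sum>p\<in>{p. X$fst p$snd p \<noteq> 0}. if p = (r,c) then X$r$c else 0)"
      unfolding sum_component by (rule sum.cong) (auto simp: cmat_scale_def EE_def)
    also have "\<dots> = X$r$c" by (simp add: sum.delta)
    finally show ?thesis .
  qed
  thus ?thesis by (simp add: vec_eq_iff)
qed



lemma sum_closed:
  assumes "finite F" "\<And>x. x \<in> F \<Longrightarrow> f x \<in> C" "0 \<in> C" "\<And>X Y. X \<in> C \<Longrightarrow> Y \<in> C \<Longrightarrow> X + Y \<in> C"
  shows "sum f F \<in> C"
  using assms(1,2)
proof (induction F rule: finite_induct)
  case empty then show ?case using assms(3) by simp
next
  case (insert x F) then show ?case using assms(4) by simp
qed

lemma psi_facts:
  assumes "complex_alg_str psi"
  shows "psi 0 = 0" "psi (of_nat k) = of_nat k" "k \<noteq> 0 \<Longrightarrow> psi (1 / of_nat k) * of_nat k = 1"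
    "psi c * x = x * psi c"
proof -
  have add: "\<And>a b. psi (a+b) = psi a + psi b" and mul: "\<And>a b. psi (a*b) = psi a * psi b"
    and one: "psi 1 = 1" and cen: "\<And>a x. psi a * x = x * psi a"
    using assms unfolding complex_alg_str_def by blast+
  show z: "psi 0 = 0" using add[of 0 0] by simp
  show n: "psi (of_nat k) = of_nat k" for k
    proof (induction k)
    case (Suc k) then show ?case using add[of 1 "of_nat k"] one by (simp add: add.commute)
  qed (simp add: z)
  show "k \<noteq> 0 \<Longrightarrow> psi (1 / of_nat k) * of_nat k = 1"
    using mul[of "1 / of_nat k" "of_nat k"] n[of k] one by simp
  show "psi c * x = x * psi c" by (rule cen)
qed



lemma mat_rdistrib: "((A::complex^'n::finite^'n) + B) ** C = A ** C + B ** C"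
  by (simp add: vec_eq_iff mm_comp distrib_right sum.distrib)

theorem lemma3p7:
  fixes m n l :: nat
    and blk :: "'n::finite \<Rightarrow> nat"
    and AA :: "(complex^'n^'n) set"
    and psi :: "complex \<Rightarrow> 'b::ring_1"
    and phi :: "complex^'n^'n \<Rightarrow> 'b"
    and delta :: "complex^'n^'n \<Rightarrow> 'b"
  assumes "m + l \<ge> 1" and "n + l \<ge> 1"
    and "CSL_subalgebra (blockdiag blk) AA"
    and "complex_alg_str psi"
    and "unital_subalg_embedding psi (blockdiag blk) phi"
    and "linear_on_into psi AA delta"
    and "\<forall>A\<in>AA. of_nat (m + n + l) * delta (A ** A) =
            of_nat m * (delta A * phi A) + of_nat n * (phi A * delta A)
            + of_nat l * (phi A * delta (mat 1) * phi A)"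
  shows "\<forall>A\<in>AA. \<forall>B\<in>AA. delta (A ** B) = delta A * phi B \<and> delta (A ** B) = phi A * delta B"
proof -
  define bd where "bd = blockdiag blk"
  obtain L where L: "diag_proj_lattice L" "\<forall>P\<in>L. P \<in> bd" "AA = alg_lat bd L"
    using assms(3) unfolding CSL_subalgebra_def bd_def by blast
  have dpl: "\<forall>P\<in>L. diag_proj P" using L(1) unfolding diag_proj_lattice_def by blast
  have memAA: "X \<in> AA \<longleftrightarrow> X \<in> bd \<and> (\<forall>P\<in>L. \<forall>S. P = dp S \<longrightarrow> okS S X)" for X
    using alg_char[OF dpl] L(3) by blast
  have AAbd: "X \<in> AA \<Longrightarrow> X \<in> bd" for X using memAA by blast
  have AA_add: "X \<in> AA \<Longrightarrow> Y \<in> AA \<Longrightarrow> X + Y \<in> AA" for X Y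
    unfolding memAA bd_def by (auto intro: bd_add ok_add)
  have AA_mult: "X \<in> AA \<Longrightarrow> Y \<in> AA \<Longrightarrow> X ** Y \<in> AA" for X Y
    unfolding memAA bd_def by (auto intro: bd_mult ok_mult)
  have AA_one: "mat 1 \<in> AA"
    unfolding memAA bd_def by (auto intro: bd_one ok_one)
  have AA_E: "X \<in> AA \<Longrightarrow> X$i$j \<noteq> 0 \<Longrightarrow> EE i j \<in> AA" for X i j
    unfolding memAA bd_def by (auto intro: bd_E ok_E)
  have AA_Q: "X \<in> AA \<Longrightarrow> X$i$j \<noteq> 0 \<Longrightarrow> QQ i j \<in> AA" for X i j
    unfolding memAA bd_def by (auto intro: bd_Q ok_Q)
  have AA_Eii: "EE i i \<in> AA" for i
    using AA_E[OF AA_one, of i i] by (simp add: mat_def)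

  note ps = psi_facts[OF assms(4)]
  have phi_add: "X \<in> bd \<Longrightarrow> Y \<in> bd \<Longrightarrow> phi (X + Y) = phi X + phi Y" for X Y
    using assms(5) unfolding unital_subalg_embedding_def bd_def by blast
  have phi_mult: "X \<in> bd \<Longrightarrow> Y \<in> bd \<Longrightarrow> phi (X ** Y) = phi X * phi Y" for X Y
    using assms(5) unfolding unital_subalg_embedding_def bd_def by blast
  have phi_one: "phi (mat 1) = 1"
    using assms(5) unfolding unital_subalg_embedding_def by blast
  have phi_scale: "X \<in> bd \<Longrightarrow> phi (cmat_scale c X) = psi c * phi X" for X c
    using assms(5) unfolding unital_subalg_embedding_def bd_def by blast
  have phi_zero: "phi 0 = 0"
    using phi_add[of 0 0] bd_zero[of blk] unfolding bd_def by simp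
  have d_add: "X \<in> AA \<Longrightarrow> Y \<in> AA \<Longrightarrow> delta (X + Y) = delta X + delta Y" for X Y
    using assms(6) unfolding linear_on_into_def by blast
  define T where "T = delta (mat 1)"
  have hyp: "of_nat (m + n + l) * delta (A ** A) =
            of_nat m * (delta A * phi A) + of_nat n * (phi A * delta A)
            + of_nat l * (phi A * T * phi A)" if "A \<in> AA" for A
    using assms(7) that unfolding T_def by blast
  have inv: "\<exists>u. u * of_nat k = (1::'b)" if "k \<noteq> 0" for k
    using ps(3)[OF that] by blast

  have star: "of_nat (m+n+2*l) * delta A = of_nat (m+l)*(T*phi A) + of_nat (n+l)*(phi A*T)"
    if A: "A \<in> AA" for A
  proof (rule ring_star[of "m+n+l" "delta (A ** A)" m _ "phi A" n l])
    show "of_nat (m+n+l) * delta (A ** A) = of_nat m*(delta A*phi A) + of_nat n*(phi A*delta A) + of_nat l*(phi A*T*phi A)"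
      using hyp[OF A] .
    have A1: "A + mat 1 \<in> AA" using AA_add[OF A AA_one] .
    have AA2: "A ** A \<in> AA" using AA_mult[OF A A] .
    have sq: "(A + mat 1) ** (A + mat 1) = A ** A + A + A + mat 1"
      by (simp add: matrix_add_ldistrib mat_rdistrib add_ac)
    have "delta ((A + mat 1) ** (A + mat 1)) = delta (A ** A) + delta A + delta A + T"
    proof -
      have s1: "A ** A + A \<in> AA" using AA_add[OF AA2 A] .
      have s2: "A ** A + A + A \<in> AA" using AA_add[OF s1 A] .
      show ?thesis unfolding sq T_def d_add[OF s2 AA_one] d_add[OF s1 A] d_add[OF AA2 A] ..
    qed
    moreover have "delta (A + mat 1) = delta A + T" unfolding T_def using d_add[OF A AA_one] .
    moreover have "phi (A + mat 1) = phi A + 1" using phi_add[OF AAbd[OF A] AAbd[OF AA_one]] phi_one by simp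
    ultimately show "of_nat (m+n+l)*(delta (A ** A) + delta A + delta A + T) = of_nat m*((delta A+T)*(phi A+1)) + of_nat n*((phi A+1)*(delta A+T)) + of_nat l*((phi A+1)*T*(phi A+1))"
      using hyp[OF A1] by simp
  qed simp

  have idem: "T * phi P = phi P * T" if P: "P \<in> AA" "P ** P = P" for P
  proof -
    have "m+l > 0" "n+l > 0" using assms(1,2) by linarith+
    hence nz: "(m+l)*(n+l) \<noteq> 0" by simp
    obtain u where u: "u * of_nat ((m+l)*(n+l)) = (1::'b)" using inv[OF nz] by blast
    have pp: "phi P * phi P = phi P" using phi_mult[OF AAbd[OF P(1)] AAbd[OF P(1)]] P(2) by simp
    show ?thesis
      by (rule ring_key[OF pp star[OF P(1)] _ u]) (use hyp[OF P(1)] P(2) in simp)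
  qed

  define C where "C = {X \<in> bd. T * phi X = phi X * T}"
  have C_add: "X \<in> C \<Longrightarrow> Y \<in> C \<Longrightarrow> X + Y \<in> C" for X Y
    unfolding C_def using phi_add bd_add[of X blk Y] unfolding bd_def by (simp add: distrib_left distrib_right)
  have C_zero: "0 \<in> C" unfolding C_def using bd_zero phi_zero unfolding bd_def by simp
  have C_scale: "X \<in> C \<Longrightarrow> cmat_scale c X \<in> C" for X c
  proof -
    assume X: "X \<in> C"
    hence Xb: "X \<in> bd" and XT: "T * phi X = phi X * T" unfolding C_def by auto
    have "T * (psi c * phi X) = psi c * (T * phi X)"
      by (metis mult.assoc ps(4))
    also have "\<dots> = psi c * phi X * T" using XT by (simp add: mult.assoc)
    finally show ?thesis unfolding C_def using phi_scale[OF Xb] bd_scale Xb unfolding bd_def by simp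
  qed
  have C_E: "EE i j \<in> C" if "EE i j \<in> AA" for i j
  proof (cases "i = j")
    case True
    then show ?thesis using idem[OF that] EE_idem[of i] that AAbd unfolding C_def by auto
  next
    case False
    have Ev: "EE i j $ i $ j \<noteq> 0" by (simp add: EE_def)
    have Q: "QQ i j \<in> AA" using AA_Q[OF that Ev] .
    have Qs: "phi (QQ i j) = phi (EE i i) + phi (EE i j)"
      using QQ_split[OF False] phi_add AAbd AA_Eii that by simp
    have h1: "T * phi (QQ i j) = phi (QQ i j) * T" using idem[OF Q QQ_idem] .
    have h2: "T * phi (EE i i) = phi (EE i i) * T" using idem[OF AA_Eii EE_idem] .
    from h1 h2 have "T * phi (EE i j) = phi (EE i j) * T"
      unfolding Qs by (simp add: distrib_left distrib_right)
    then show ?thesis using that AAbd unfolding C_def by auto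
  qed
  have comm: "T * phi A = phi A * T" if A: "A \<in> AA" for A
  proof -
    have "(\<Sum>p\<in>{p. A$fst p$snd p \<noteq> 0}. cmat_scale (A$fst p$snd p) (EE (fst p) (snd p))) \<in> C"
      by (rule sum_closed[OF _ _ C_zero C_add]) (auto intro!: C_scale C_E AA_E[OF A])
    thus ?thesis using decomp[of A] unfolding C_def by simp
  qed
  have dT: "delta A = T * phi A" if A: "A \<in> AA" for A
  proof -
    have "of_nat (m+n+2*l) * delta A = of_nat (m+n+2*l) * (T * phi A)"
    proof -
      have "of_nat (m+n+2*l) * delta A = of_nat (m+l)*(T*phi A) + of_nat (n+l)*(T*phi A)"
        using star[OF A] unfolding comm[OF A, symmetric] .
      also have "\<dots> = of_nat ((m+l)+(n+l)) * (T*phi A)" by (simp only: of_nat_add distrib_right)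
      also have "(m+l)+(n+l) = m+n+2*l" by simp
      finally show ?thesis .
    qed
    moreover have "m+n+2*l \<noteq> 0" using assms(1) by linarith
    then obtain u where u: "u * of_nat (m+n+2*l) = (1::'b)" using inv by blast
    ultimately have "u * (of_nat (m+n+2*l) * delta A) = u * (of_nat (m+n+2*l) * (T * phi A))" by simp
    thus ?thesis using u by (simp flip: mult.assoc)
  qed
  show ?thesis
  proof (intro ballI conjI)
    fix A B assume A: "A \<in> AA" and B: "B \<in> AA"
    have AB: "delta (A ** B) = T * (phi A * phi B)"
      using dT[OF AA_mult[OF A B]] phi_mult[OF AAbd[OF A] AAbd[OF B]] by simp
    show "delta (A ** B) = delta A * phi B" using AB dT[OF A] by (simp add: mult.assoc)
    have "phi A * delta B = (phi A * T) * phi B" unfolding dT[OF B] by (simp only: mult.assoc)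
    also have "\<dots> = T * (phi A * phi B)" unfolding comm[OF A, symmetric] by (simp only: mult.assoc)
    finally show "delta (A ** B) = phi A * delta B" using AB by simp
  qed
qed


end
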